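(* Let $D$ be an integral domain and let $T$ be a $t$-Jaffard overring of $D$. Then for every fractional ideal $I$ of $D$ we have $(D:I)T=(T:IT)$.
   Context: $K$ is the quotient field of $D$; an overring is a ring between $D$ and $K$, flat if flat as a $D$-module. For $D$-submodules, $(A:B)=\{x\in K\mid xB\subseteq A\}$. A family $\Theta$ of overrings of $D$ is a $t$-Jaffard family if: either $\Theta=\{K\}$ or $K\notin\Theta$; every $T\in\Theta$ is flat over $D$; $\Theta$ is independent ($TT'=K$ for distinct $T,T'\in\Theta$); $\Theta$ is locally finite (every nonzero $x\in D$ is a nonunit in only finitely many $T\in\Theta$); and $\bigcap_{T\in\Theta}T=D$. A $t$-Jaffard overring is a member of some $t$-Jaffard family of $D$. *)

theory Defs
  imports Main
begin

text \<open>Convention: the integral domain D is represented as a subring of a field 'k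
  whose elements are exactly the quotients of elements of D, i.e. 'k (= UNIV) is the
  quotient field K of D.\<close>

definition subring_of :: "'k::field set \<Rightarrow> bool" where
  "subring_of R \<longleftrightarrow> 0 \<in> R \<and> 1 \<in> R \<and> (\<forall>x\<in>R. \<forall>y\<in>R. x + y \<in> R \<and> x * y \<in> R) \<and> (\<forall>x\<in>R. - x \<in> R)"

definition is_quotient_field_of :: "'k::field set \<Rightarrow> bool" where
  "is_quotient_field_of D \<longleftrightarrow> (\<forall>x. \<exists>a\<in>D. \<exists>b\<in>D. b \<noteq> 0 \<and> x = a / b)"

definition overring :: "'k::field set \<Rightarrow> 'k set \<Rightarrow> bool" where
  "overring D T \<longleftrightarrow> subring_of T \<and> D \<subseteq> T"

definition set_prod :: "'k::field set \<Rightarrow> 'k set \<Rightarrow> 'k set" where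
  "set_prod A B = {x. \<exists>(n::nat) (f::nat \<Rightarrow> 'k) g. (\<forall>i<n. f i \<in> A \<and> g i \<in> B) \<and> x = (\<Sum>i<n. f i * g i)}"

definition colon :: "'k::field set \<Rightarrow> 'k set \<Rightarrow> 'k set" where
  "colon A B = {x. \<forall>b\<in>B. x * b \<in> A}"

text \<open>Flatness of T as a D-module, via the equational criterion of flatness.\<close>
definition flat_over :: "'k::field set \<Rightarrow> 'k set \<Rightarrow> bool" where
  "flat_over D T \<longleftrightarrow>
    (\<forall>(n::nat) (a::nat \<Rightarrow> 'k) (x::nat \<Rightarrow> 'k). (\<forall>i<n. a i \<in> D \<and> x i \<in> T) \<and> (\<Sum>i<n. a i * x i) = 0 \<longrightarrow>
       (\<exists>(m::nat) (b::nat \<Rightarrow> nat \<Rightarrow> 'k) (y::nat \<Rightarrow> 'k). (\<forall>j<m. y j \<in> T) \<and> (\<forall>i<n. \<forall>j<m. b i j \<in> D) \<and>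
           (\<forall>i<n. x i = (\<Sum>j<m. b i j * y j)) \<and>
           (\<forall>j<m. (\<Sum>i<n. a i * b i j) = 0)))"

definition is_unit_in :: "'k::field set \<Rightarrow> 'k \<Rightarrow> bool" where
  "is_unit_in T x \<longleftrightarrow> (\<exists>y\<in>T. x * y = 1)"

definition t_Jaffard_family :: "'k::field set \<Rightarrow> 'k set set \<Rightarrow> bool" where
  "t_Jaffard_family D \<Theta> \<longleftrightarrow>
     (\<Theta> = {UNIV} \<or> UNIV \<notin> \<Theta>) \<and>
     (\<forall>T\<in>\<Theta>. overring D T \<and> flat_over D T) \<and>
     (\<forall>T\<in>\<Theta>. \<forall>T'\<in>\<Theta>. T \<noteq> T' \<longrightarrow> set_prod T T' = UNIV) \<and>
     (\<forall>x\<in>D. x \<noteq> 0 \<longrightarrow> finite {T\<in>\<Theta>. \<not> is_unit_in T x}) \<and>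
     \<Inter>\<Theta> = D"

definition t_Jaffard_overring :: "'k::field set \<Rightarrow> 'k set \<Rightarrow> bool" where
  "t_Jaffard_overring D T \<longleftrightarrow> (\<exists>\<Theta>. t_Jaffard_family D \<Theta> \<and> T \<in> \<Theta>)"

definition fractional_ideal :: "'k::field set \<Rightarrow> 'k set \<Rightarrow> bool" where
  "fractional_ideal D I \<longleftrightarrow>
     0 \<in> I \<and> (\<forall>x\<in>I. \<forall>y\<in>I. x + y \<in> I) \<and> (\<forall>r\<in>D. \<forall>x\<in>I. r * x \<in> I) \<and>
     I \<noteq> {0} \<and> (\<exists>d\<in>D. d \<noteq> 0 \<and> (\<forall>x\<in>I. d * x \<in> D))"

end

theory Submission
  imports Defs
begin

lemma sp_zero: "0 \<in> set_prod A B"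
  unfolding set_prod_def by (rule CollectI, rule exI[of _ 0]) auto

lemma sp_step:
  fixes A B :: "'k::field set"
  assumes "x \<in> set_prod A B" "a \<in> A" "b \<in> B"
  shows "x + a * b \<in> set_prod A B"
proof -
  from assms(1) obtain n :: nat and f g where fg: "\<forall>i<n. f i \<in> A \<and> g i \<in> B" "x = (\<Sum>i<n. f i * g i)"
    unfolding set_prod_def by blast
  let ?f = "f(n := a)" and ?g = "g(n := b)"
  have "(\<Sum>i<Suc n. ?f i * ?g i) = (\<Sum>i<n. ?f i * ?g i) + a * b" by simp
  also have "(\<Sum>i<n. ?f i * ?g i) = (\<Sum>i<n. f i * g i)" by (rule sum.cong) auto
  finally have "x + a * b = (\<Sum>i<Suc n. ?f i * ?g i)" using fg by simp
  moreover have "\<forall>i<Suc n. ?f i \<in> A \<and> ?g i \<in> B" using fg assms by (auto simp: less_Suc_eq)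
  ultimately show ?thesis unfolding set_prod_def by blast
qed

lemma sp_induct[consumes 1, case_names zero step]:
  fixes A B :: "'k::field set"
  assumes "z \<in> set_prod A B" "P 0"
    and step: "\<And>x a b. P x \<Longrightarrow> a \<in> A \<Longrightarrow> b \<in> B \<Longrightarrow> P (x + a * b)"
  shows "P z"
proof -
  from assms(1) obtain n :: nat and f g where fg: "\<forall>i<n. f i \<in> A \<and> g i \<in> B" "z = (\<Sum>i<n. f i * g i)"
    unfolding set_prod_def by blast
  have "(\<forall>i<n. f i \<in> A \<and> g i \<in> B) \<longrightarrow> P (\<Sum>i<n. f i * g i)"
  proof (induction n)
    case 0 then show ?case using assms(2) by simp
  next
    case (Suc n) then show ?case using step by (simp add: less_Suc_eq)
  qed
  then show ?thesis using fg by simp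
qed

lemma sp_add:
  assumes "x \<in> set_prod A B" "y \<in> set_prod A B"
  shows "x + y \<in> set_prod A B"
  using assms(2)
  by (induction rule: sp_induct) (use assms(1) in \<open>auto simp: add.assoc[symmetric] intro: sp_step\<close>)

lemma sp_single: "a \<in> A \<Longrightarrow> b \<in> B \<Longrightarrow> a * b \<in> set_prod A B"
  using sp_step[OF sp_zero] by fastforce

lemma sp_mult:
  assumes "x \<in> set_prod A B" "y \<in> set_prod A' B'"
    and AA: "\<And>a a'. a \<in> A \<Longrightarrow> a' \<in> A' \<Longrightarrow> a * a' \<in> A''"
    and BB: "\<And>b b'. b \<in> B \<Longrightarrow> b' \<in> B' \<Longrightarrow> b * b' \<in> B''"
  shows "x * y \<in> set_prod A'' B''"
  using assms(1)
proof (induction rule: sp_induct)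
  case zero then show ?case by (simp add: sp_zero)
next
  case (step x a b)
  have "(a * b) * y \<in> set_prod A'' B''"
    using assms(2)
  proof (induction rule: sp_induct)
    case zero then show ?case by (simp add: sp_zero)
  next
    case (step z a' b')
    have "a * b * (z + a' * b') = a * b * z + (a * a') * (b * b')" by (simp add: algebra_simps)
    then show ?case using step sp_add sp_single AA BB \<open>a \<in> A\<close> \<open>b \<in> B\<close> by metis
  qed
  then show ?case using step sp_add by (metis distrib_right)
qed

lemma subring_sum:
  assumes "subring_of S" "\<forall>i<(n::nat). h i \<in> S"
  shows "(\<Sum>i<n. h i) \<in> S"
  using assms(2)
  by (induction n) (use assms(1) in \<open>auto simp: subring_of_def\<close>)

lemma sp_sub:
  assumes "subring_of T" "D \<subseteq> T" "z \<in> set_prod D T"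
  shows "z \<in> T"
  using assms(3)
  by (induction rule: sp_induct) (use assms(1,2) in \<open>auto simp: subring_of_def\<close>)


lemma common_denom:
  fixes D :: "'k::field set"
  assumes "subring_of D" "is_quotient_field_of D"
  shows "\<exists>c\<in>D. c \<noteq> 0 \<and> (\<forall>k<(n::nat). c * g k \<in> D)"
proof (induction n)
  case 0 then show ?case using assms(1) by (intro bexI[of _ 1]) (auto simp: subring_of_def)
next
  case (Suc n)
  then obtain c where c: "c \<in> D" "c \<noteq> 0" "\<forall>k<n. c * g k \<in> D" by blast
  obtain p q where pq: "p \<in> D" "q \<in> D" "q \<noteq> 0" "g n = p / q"
    using assms(2) unfolding is_quotient_field_of_def by blast
  have "c * q \<in> D" using c pq assms(1) by (auto simp: subring_of_def)
  moreover have "c * q \<noteq> 0" using c pq by simp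
  moreover have "\<forall>k<Suc n. c * q * g k \<in> D"
  proof (intro allI impI)
    fix k assume "k < Suc n"
    then consider "k < n" | "k = n" by linarith
    then show "c * q * g k \<in> D"
    proof cases
      case 1
      then have "c * g k \<in> D" using c by blast
      then have "q * (c * g k) \<in> D" using pq assms(1) by (auto simp: subring_of_def)
      then show ?thesis by (simp add: algebra_simps)
    next
      case 2
      have "c * q * g n = c * p" using pq by simp
      moreover have "c * p \<in> D" using c pq assms(1) by (auto simp: subring_of_def)
      ultimately show ?thesis using 2 by metis
    qed
  qed
  ultimately show ?case by blast
qed

lemma one_in:
  fixes D T S :: "'k::field set"
  assumes D: "subring_of D" "is_quotient_field_of D"
    and T: "subring_of T" "D \<subseteq> T" "flat_over D T"
    and S: "subring_of S" "D \<subseteq> S"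
    and TS: "set_prod T S = UNIV"
    and b: "b \<in> D" "b \<noteq> 0"
  shows "1 \<in> set_prod {u\<in>D. u / b \<in> S} T"
proof -
  have "1 / b \<in> set_prod T S" using TS by simp
  then obtain n :: nat and f g where fg: "\<forall>i<n. f i \<in> T \<and> g i \<in> S" "1 / b = (\<Sum>i<n. f i * g i)"
    unfolding set_prod_def by blast
  obtain c where c: "c \<in> D" "c \<noteq> 0" "\<forall>k<n. c * g k \<in> D"
    using common_denom[OF D] by blast
  define a where "a i = (if i < n then c * b * g i else - c)" for i
  define xx where "xx i = (if i < n then f i else 1)" for i
  have aD: "\<forall>i<Suc n. a i \<in> D \<and> xx i \<in> T"
  proof (intro allI impI)
    fix i assume i: "i < Suc n"
    show "a i \<in> D \<and> xx i \<in> T"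
    proof (cases "i < n")
      case True
      then have "c * g i \<in> D" using c by blast
      then have "b * (c * g i) \<in> D" using b D(1) by (auto simp: subring_of_def)
      then show ?thesis using True fg unfolding a_def xx_def by (simp add: algebra_simps)
    next
      case False
      then show ?thesis using c D(1) T(1) unfolding a_def xx_def subring_of_def by auto
    qed
  qed
  have "(\<Sum>i<Suc n. a i * xx i) = (\<Sum>i<n. c * b * (f i * g i)) - c"
    unfolding a_def xx_def by (simp add: algebra_simps)
  also have "\<dots> = c * b * (1 / b) - c" using fg(2) by (simp add: sum_distrib_left)
  also have "\<dots> = 0" using b by simp
  finally have rel: "(\<Sum>i<Suc n. a i * xx i) = 0" .
  obtain m :: nat and \<beta> y where fl: "\<forall>j<m. y j \<in> T" "\<forall>i<Suc n. \<forall>j<m. \<beta> i j \<in> D"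
    "\<forall>i<Suc n. xx i = (\<Sum>j<m. \<beta> i j * y j)" "\<forall>j<m. (\<Sum>i<Suc n. a i * \<beta> i j) = 0"
    using T(3)[unfolded flat_over_def, rule_format, OF conjI[OF aD rel]] by blast
  have "\<forall>j<m. \<beta> n j \<in> {u\<in>D. u / b \<in> S}"
  proof (intro allI impI)
    fix j assume j: "j < m"
    have eq1: "(\<Sum>i<Suc n. a i * \<beta> i j) = c * b * (\<Sum>i<n. g i * \<beta> i j) - c * \<beta> n j"
      unfolding a_def by (simp add: sum_distrib_left algebra_simps)
    have "c * b * (\<Sum>i<n. g i * \<beta> i j) - c * \<beta> n j = 0" using eq1 fl(4) j by metis
    then have "c * (b * (\<Sum>i<n. g i * \<beta> i j) - \<beta> n j) = 0"
      by (simp add: right_diff_distrib mult.assoc)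
    then have "b * (\<Sum>i<n. g i * \<beta> i j) - \<beta> n j = 0" using c by simp
    then have "\<beta> n j = b * (\<Sum>i<n. g i * \<beta> i j)" by simp
    then have "\<beta> n j / b = (\<Sum>i<n. g i * \<beta> i j)" using b by simp
    moreover have "(\<Sum>i<n. g i * \<beta> i j) \<in> S"
    proof (rule subring_sum[OF S(1)], intro allI impI)
      fix i assume i: "i < n"
      then have "g i \<in> S" "\<beta> i j \<in> S" using fg(1) fl(2) j S(2) by auto
      then show "g i * \<beta> i j \<in> S" using S(1) unfolding subring_of_def by blast
    qed
    ultimately show "\<beta> n j \<in> {u\<in>D. u / b \<in> S}" using fl(2) j by auto
  qed
  moreover have "1 = (\<Sum>j<m. \<beta> n j * y j)" using fl(3) unfolding xx_def by auto
  ultimately show ?thesis unfolding set_prod_def using fl(1) by blast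
qed


lemma one_in_fin:
  fixes D T :: "'k::field set"
  assumes D: "subring_of D" "is_quotient_field_of D"
    and fam: "t_Jaffard_family D \<Theta>" "T \<in> \<Theta>"
    and b: "b \<in> D" "b \<noteq> 0"
    and G: "finite G" "G \<subseteq> \<Theta> - {T}"
  shows "1 \<in> set_prod {u\<in>D. \<forall>S\<in>G. u / b \<in> S} T"
  using G
proof (induction G rule: finite_induct)
  case empty
  have "1 \<in> D" "1 \<in> T" using D(1) fam unfolding subring_of_def t_Jaffard_family_def overring_def
    by auto
  then show ?case using sp_single[of 1 "{u\<in>D. \<forall>S\<in>{}. u / b \<in> S}" 1 T] by simp
next
  case (insert S G)
  have IH: "1 \<in> set_prod {u\<in>D. \<forall>S\<in>G. u / b \<in> S} T" using insert by auto
  have S: "S \<in> \<Theta>" "S \<noteq> T" using insert by auto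
  have Tp: "subring_of T" "D \<subseteq> T" "flat_over D T"
    using fam unfolding t_Jaffard_family_def overring_def by auto
  have Sp: "subring_of S" "D \<subseteq> S"
    using fam S unfolding t_Jaffard_family_def overring_def by auto
  have TS: "set_prod T S = UNIV" using fam S unfolding t_Jaffard_family_def by auto
  have one: "1 \<in> set_prod {u\<in>D. u / b \<in> S} T"
    by (rule one_in[OF D Tp Sp TS b])
  have "1 * 1 \<in> set_prod {u\<in>D. \<forall>S'\<in>insert S G. u / b \<in> S'} T"
  proof (rule sp_mult[OF IH one])
    fix u v assume u: "u \<in> {u\<in>D. \<forall>S\<in>G. u / b \<in> S}" and v: "v \<in> {u\<in>D. u / b \<in> S}"
    have "u * v \<in> D" using u v D(1) unfolding subring_of_def by auto
    moreover have "u * v / b \<in> S'" if "S' \<in> G" for S'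
    proof -
      have "S' \<in> \<Theta>" using insert.prems that by auto
      then have "subring_of S'" "D \<subseteq> S'"
        using fam unfolding t_Jaffard_family_def overring_def by auto
      moreover have "u / b \<in> S'" using u that by auto
      moreover have "v \<in> S'" using v calculation(2) by auto
      ultimately have "(u / b) * v \<in> S'" unfolding subring_of_def by blast
      then show ?thesis by simp
    qed
    moreover have "u * v / b \<in> S"
    proof -
      have "u \<in> S" "v / b \<in> S" using u v Sp by auto
      then have "u * (v / b) \<in> S" using Sp unfolding subring_of_def by blast
      then show ?thesis by simp
    qed
    ultimately show "u * v \<in> {u\<in>D. \<forall>S'\<in>insert S G. u / b \<in> S'}" by auto
  next
    fix s t assume "s \<in> T" "t \<in> T"
    then show "s * t \<in> T" using Tp unfolding subring_of_def by auto
  qed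
  then show ?case by simp
qed

theorem proposition3p2:
  fixes D T I :: "'k::field set"
  assumes "subring_of D"
    and "is_quotient_field_of D"
    and "t_Jaffard_overring D T"
    and "fractional_ideal D I"
  shows "set_prod (colon D I) T = colon T (set_prod I T)"
proof -
  obtain \<Theta> where fam: "t_Jaffard_family D \<Theta>" "T \<in> \<Theta>"
    using assms(3) unfolding t_Jaffard_overring_def by blast
  have Tp: "subring_of T" "D \<subseteq> T"
    using fam unfolding t_Jaffard_family_def overring_def by auto
  have ThS: "\<And>S. S \<in> \<Theta> \<Longrightarrow> subring_of S \<and> D \<subseteq> S"
    using fam unfolding t_Jaffard_family_def overring_def by auto
  have inter: "\<And>v. (\<forall>S\<in>\<Theta>. v \<in> S) \<Longrightarrow> v \<in> D"
    using fam unfolding t_Jaffard_family_def by auto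
  have TT: "\<And>s t. s \<in> T \<Longrightarrow> t \<in> T \<Longrightarrow> s * t \<in> T"
    using Tp unfolding subring_of_def by auto
  show ?thesis
  proof
    show "set_prod (colon D I) T \<subseteq> colon T (set_prod I T)"
    proof
      fix z assume z: "z \<in> set_prod (colon D I) T"
      have "\<forall>w\<in>set_prod I T. z * w \<in> T"
      proof
        fix w assume w: "w \<in> set_prod I T"
        have "z * w \<in> set_prod D T"
          by (rule sp_mult[OF z w]) (auto simp: colon_def intro: TT)
        then show "z * w \<in> T" using sp_sub[OF Tp] by blast
      qed
      then show "z \<in> colon T (set_prod I T)" unfolding colon_def by blast
    qed
  next
    show "colon T (set_prod I T) \<subseteq> set_prod (colon D I) T"
    proof
      fix x assume x: "x \<in> colon T (set_prod I T)"
      have one_T: "1 \<in> T" using Tp unfolding subring_of_def by auto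
      have xi: "x * i \<in> T" if "i \<in> I" for i
      proof -
        have "i * 1 \<in> set_prod I T" using sp_single[OF that one_T] .
        then show ?thesis using x unfolding colon_def by auto
      qed
      obtain d where d: "d \<in> D" "d \<noteq> 0" "\<forall>i\<in>I. d * i \<in> D"
        using assms(4) unfolding fractional_ideal_def by blast
      obtain a b where ab: "a \<in> D" "b \<in> D" "b \<noteq> 0" "x / d = a / b"
        using assms(2) unfolding is_quotient_field_of_def by blast
      have xab: "x = (a / b) * d" using ab(4) d(2) by (simp add: field_simps)
      define G where "G = {S\<in>\<Theta>. \<not> is_unit_in S b} - {T}"
      have finG: "finite G" unfolding G_def
        using fam ab unfolding t_Jaffard_family_def by auto
      have one: "1 \<in> set_prod {u\<in>D. \<forall>S\<in>G. u / b \<in> S} T"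
        by (rule one_in_fin[OF assms(1,2) fam ab(2,3) finG]) (auto simp: G_def)
      have key: "u * x \<in> colon D I" if u: "u \<in> {u\<in>D. \<forall>S\<in>G. u / b \<in> S}" for u
        unfolding colon_def
      proof (intro CollectI ballI)
        fix i assume i: "i \<in> I"
        show "u * x * i \<in> D"
        proof (rule inter, intro ballI)
          fix S assume S: "S \<in> \<Theta>"
          show "u * x * i \<in> S"
          proof (cases "S = T")
            case True
            have "u \<in> T" using u Tp by auto
            then have "u * (x * i) \<in> T" using TT xi[OF i] by blast
            then show ?thesis using True by (simp add: mult.assoc)
          next
            case False
            have Sp: "subring_of S" "D \<subseteq> S" using ThS[OF S] by auto
            have ub: "u / b \<in> S"
            proof (cases "S \<in> G")
              case True then show ?thesis using u by auto
            next
              case False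
              then have "is_unit_in S b" using S \<open>S \<noteq> T\<close> unfolding G_def by auto
              then obtain y where y: "y \<in> S" "b * y = 1" unfolding is_unit_in_def by blast
              then have "y = 1 / b" using ab(3) by (simp add: field_simps)
              then have "u / b = u * y" by simp
              moreover have "u \<in> S" using u Sp by auto
              ultimately show ?thesis using y Sp(1) unfolding subring_of_def by auto
            qed
            have "a \<in> S" "d * i \<in> S" using ab d i Sp by auto
            then have "(u / b) * a * (d * i) \<in> S" using ub Sp(1) unfolding subring_of_def by blast
            moreover have "u * x * i = (u / b) * a * (d * i)" using xab by simp
            ultimately show ?thesis by simp
          qed
        qed
      qed
      have "x \<in> set_prod {x} {1}" using sp_single[of x "{x}" 1 "{1}"] by simp
      then have "x * 1 \<in> set_prod (colon D I) T"
        by (rule sp_mult[OF _ one]) (use key in \<open>auto simp: mult.commute\<close>)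
      then show "x \<in> set_prod (colon D I) T" by simp
    qed
  qed
qed

end
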